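(* Let $A$ and $B$ be rings, $f: A\to B$ a ring homomorphism and $J$ a proper ideal of $B$. Let $S$ be the set of regular central elements of $B$ (central elements that are not zero divisors), and assume $J\cap S\neq\varnothing$. Then $A\bowtie^{f}J$ is a weak Armendariz ring if and only if both $A$ and $f(A)+J$ are weak Armendariz rings.
   Context: All rings are associative with identity (not necessarily commutative), ring homomorphisms are unital, and ideals are two-sided. $\mathrm{nil}(R)$ denotes the set of nilpotent elements of a ring $R$. For a ring homomorphism $f:A\to B$ and an ideal $J$ of $B$, the amalgamation is the subring $A\bowtie^{f}J=\{(a,f(a)+j)\mid a\in A,\ j\in J\}$ of $A\times B$; $f(A)+J=\{f(a)+j: a\in A, j\in J\}$ is a subring of $B$. A ring $R$ is weak Armendariz if whenever $p(x)=\sum_{i=0}^n a_ix^i$ and $q(x)=\sum_{j=0}^m b_jx^j$ in $R[x]$ satisfy $p(x)q(x)=0$, then $a_ib_j\in\mathrm{nil}(R)$ for all $i,j$. *)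

theory Defs
  imports "HOL-Algebra.Algebra"
begin

definition nil_elems :: "('a, 'm) ring_scheme \<Rightarrow> 'a set" where
  "nil_elems R = {a \<in> carrier R. \<exists>n::nat. a [^]\<^bsub>R\<^esub> n = \<zero>\<^bsub>R\<^esub>}"

definition weak_armendariz :: "('a, 'm) ring_scheme \<Rightarrow> bool" where
  "weak_armendariz R \<longleftrightarrow>
     (\<forall>p \<in> carrier (UP R). \<forall>q \<in> carrier (UP R).
        p \<otimes>\<^bsub>UP R\<^esub> q = \<zero>\<^bsub>UP R\<^esub> \<longrightarrow>
        (\<forall>i j. coeff (UP R) p i \<otimes>\<^bsub>R\<^esub> coeff (UP R) q j \<in> nil_elems R))"

definition regular_central :: "('a, 'm) ring_scheme \<Rightarrow> 'a set" where
  "regular_central B = {s \<in> carrier B.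
      (\<forall>b \<in> carrier B. s \<otimes>\<^bsub>B\<^esub> b = b \<otimes>\<^bsub>B\<^esub> s) \<and>
      (\<forall>b \<in> carrier B. s \<otimes>\<^bsub>B\<^esub> b = \<zero>\<^bsub>B\<^esub> \<longrightarrow> b = \<zero>\<^bsub>B\<^esub>) \<and>
      (\<forall>b \<in> carrier B. b \<otimes>\<^bsub>B\<^esub> s = \<zero>\<^bsub>B\<^esub> \<longrightarrow> b = \<zero>\<^bsub>B\<^esub>)}"

definition amalgamation ::
  "('a, 'm) ring_scheme \<Rightarrow> ('b, 'n) ring_scheme \<Rightarrow> ('a \<Rightarrow> 'b) \<Rightarrow> 'b set \<Rightarrow> ('a \<times> 'b) ring" where
  "amalgamation A B f J = (RDirProd A B)\<lparr>carrier :=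
      {(a, f a \<oplus>\<^bsub>B\<^esub> j) | a j. a \<in> carrier A \<and> j \<in> J}\<rparr>"

definition img_plus_ideal ::
  "('a, 'm) ring_scheme \<Rightarrow> ('b, 'n) ring_scheme \<Rightarrow> ('a \<Rightarrow> 'b) \<Rightarrow> 'b set \<Rightarrow> ('b, 'n) ring_scheme" where
  "img_plus_ideal A B f J = B\<lparr>carrier := {f a \<oplus>\<^bsub>B\<^esub> j | a j. a \<in> carrier A \<and> j \<in> J}\<rparr>"

end

theory Submission
  imports Defs
begin


lemma UP_carrier_eq: "carrier (UP R) = up R" by (simp add: UP_def)
lemma UP_zero_eq: "\<zero>\<^bsub>UP R\<^esub> = (\<lambda>i. \<zero>\<^bsub>R\<^esub>)" by (simp add: UP_def)
lemma UP_coeff_eq: "p \<in> up R \<Longrightarrow> coeff (UP R) p = p" by (simp add: UP_def)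
lemma UP_mult_eq: "p \<in> up R \<Longrightarrow> q \<in> up R \<Longrightarrow>
  p \<otimes>\<^bsub>UP R\<^esub> q = (\<lambda>n. \<Oplus>\<^bsub>R\<^esub>i \<in> {..n}. p i \<otimes>\<^bsub>R\<^esub> q (n-i))" by (simp add: UP_def)

lemma map_up:
  assumes "ring R" "ring S" "h \<in> ring_hom R S" "p \<in> up R"
  shows "(\<lambda>n. h (p n)) \<in> up S"
proof -
  interpret ring_hom_ring R S h using ring_hom_ringI2 assms by blast
  from assms(4) obtain m where "bound \<zero>\<^bsub>R\<^esub> m p" by auto
  hence "bound \<zero>\<^bsub>S\<^esub> m (\<lambda>n. h (p n))" by (auto simp: bound_def)
  moreover have "\<And>n. h (p n) \<in> carrier S" using assms(4) by (blast intro: hom_closed mem_upD)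
  ultimately show ?thesis by auto
qed

lemma map_mult:
  assumes "ring R" "ring S" "h \<in> ring_hom R S" "p \<in> up R" "q \<in> up R"
  shows "(\<lambda>n. h (p n)) \<otimes>\<^bsub>UP S\<^esub> (\<lambda>n. h (q n)) = (\<lambda>n. h ((p \<otimes>\<^bsub>UP R\<^esub> q) n))"
proof -
  interpret ring_hom_ring R S h using ring_hom_ringI2 assms by blast
  show ?thesis
    using assms(4,5)
    by (simp add: UP_mult_eq map_up[OF assms(1-3)] comp_def Pi_def mem_upD)
qed

lemma transfer_wa:
  assumes "ring R" "ring S" "h \<in> ring_hom R S" "inj_on h (carrier R)" "weak_armendariz S"
  shows "weak_armendariz R"
  unfolding weak_armendariz_def
proof (intro ballI impI allI)
  interpret ring_hom_ring R S h using ring_hom_ringI2 assms by blast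
  fix p q i j assume p: "p \<in> carrier (UP R)" and q: "q \<in> carrier (UP R)"
    and pq: "p \<otimes>\<^bsub>UP R\<^esub> q = \<zero>\<^bsub>UP R\<^esub>"
  have p': "p \<in> up R" and q': "q \<in> up R" using p q by (simp_all add: UP_carrier_eq)
  have "(\<lambda>n. h (p n)) \<otimes>\<^bsub>UP S\<^esub> (\<lambda>n. h (q n)) = \<zero>\<^bsub>UP S\<^esub>"
    using map_mult[OF assms(1-3) p' q'] pq by (simp add: UP_zero_eq)
  with assms(5) have "(\<lambda>n. h (p n)) i \<otimes>\<^bsub>S\<^esub> (\<lambda>n. h (q n)) j \<in> nil_elems S"
    unfolding weak_armendariz_def
    using map_up[OF assms(1-3) p'] map_up[OF assms(1-3) q']
    by (metis UP_carrier_eq UP_coeff_eq)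
  then obtain n where "(h (p i) \<otimes>\<^bsub>S\<^esub> h (q j)) [^]\<^bsub>S\<^esub> (n::nat) = \<zero>\<^bsub>S\<^esub>"
    by (auto simp: nil_elems_def)
  moreover have pi: "p i \<in> carrier R" and qj: "q j \<in> carrier R" using p' q' by auto
  ultimately have "h ((p i \<otimes>\<^bsub>R\<^esub> q j) [^]\<^bsub>R\<^esub> n) = h \<zero>\<^bsub>R\<^esub>" by (simp add: hom_nat_pow)
  hence "(p i \<otimes>\<^bsub>R\<^esub> q j) [^]\<^bsub>R\<^esub> n = \<zero>\<^bsub>R\<^esub>" using assms(4) pi qj
    by (meson inj_onD R.m_closed R.nat_pow_closed R.zero_closed)
  thus "up_ring.coeff (UP R) p i \<otimes>\<^bsub>R\<^esub> up_ring.coeff (UP R) q j \<in> nil_elems R"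
    using pi qj p' q' by (auto simp: nil_elems_def UP_coeff_eq)
qed


lemma RDP_simps:
  "(a,b) \<otimes>\<^bsub>RDirProd A B\<^esub> (c,d) = (a \<otimes>\<^bsub>A\<^esub> c, b \<otimes>\<^bsub>B\<^esub> d)"
  "(a,b) \<oplus>\<^bsub>RDirProd A B\<^esub> (c,d) = (a \<oplus>\<^bsub>A\<^esub> c, b \<oplus>\<^bsub>B\<^esub> d)"
  "\<zero>\<^bsub>RDirProd A B\<^esub> = (\<zero>\<^bsub>A\<^esub>, \<zero>\<^bsub>B\<^esub>)"
  "\<one>\<^bsub>RDirProd A B\<^esub> = (\<one>\<^bsub>A\<^esub>, \<one>\<^bsub>B\<^esub>)"
  by (simp_all add: RDirProd_def DirProd_def monoid.defs)

lemma nat_pow_upd: "x [^]\<^bsub>G\<lparr>carrier := Y\<rparr>\<^esub> (n::nat) = x [^]\<^bsub>G\<^esub> n"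
  by (induct n) auto

lemma (in ring) pow_central:
  assumes s: "s \<in> carrier R" and z: "z \<in> carrier R" and c: "\<forall>b\<in>carrier R. s \<otimes> b = b \<otimes> s"
  shows "(s \<otimes> z) [^] (n::nat) = s [^] n \<otimes> z [^] n"
proof (induct n)
  case 0 thus ?case by simp
next
  case (Suc n)
  have "(s \<otimes> z) [^] Suc n = (s [^] n \<otimes> z [^] n) \<otimes> (s \<otimes> z)" using Suc by simp
  also have "\<dots> = s [^] n \<otimes> (z [^] n \<otimes> s) \<otimes> z" using s z by (simp add: m_assoc)
  also have "z [^] n \<otimes> s = s \<otimes> z [^] n" using c z by simp
  also have "s [^] n \<otimes> (s \<otimes> z [^] n) \<otimes> z = s [^] Suc n \<otimes> z [^] Suc n" using s z by (simp add: m_assoc)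
  finally show ?case .
qed

lemma (in ring) pow_regular:
  assumes s: "s \<in> carrier R" and r: "\<forall>b\<in>carrier R. s \<otimes> b = \<zero> \<longrightarrow> b = \<zero>"
  shows "w \<in> carrier R \<Longrightarrow> s [^] (n::nat) \<otimes> w = \<zero> \<Longrightarrow> w = \<zero>"
proof (induct n arbitrary: w)
  case 0 thus ?case by simp
next
  case (Suc n)
  have "s [^] n \<otimes> (s \<otimes> w) = \<zero>" using Suc.prems s by (simp add: m_assoc)
  hence "s \<otimes> w = \<zero>" using Suc s by simp
  thus ?case using r Suc.prems by blast
qed

context
  fixes A :: "('a, 'm) ring_scheme" and B :: "('b, 'n) ring_scheme"
    and f :: "'a \<Rightarrow> 'b" and J :: "'b set"
  assumes A: "ring A" and B: "ring B"
    and f: "f \<in> ring_hom A B"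
    and J: "ideal J B"
begin

interpretation A: ring A by (rule A)
interpretation B: ring B by (rule B)
interpretation f: ring_hom_ring A B f using ring_hom_ringI2[OF A B f] .
interpretation J: ideal J B by (rule J)

lemma Am_simps:
  "carrier (amalgamation A B f J) = {(a, f a \<oplus>\<^bsub>B\<^esub> j) | a j. a \<in> carrier A \<and> j \<in> J}"
  "x \<otimes>\<^bsub>amalgamation A B f J\<^esub> y = x \<otimes>\<^bsub>RDirProd A B\<^esub> y"
  "x \<oplus>\<^bsub>amalgamation A B f J\<^esub> y = x \<oplus>\<^bsub>RDirProd A B\<^esub> y"
  "\<zero>\<^bsub>amalgamation A B f J\<^esub> = (\<zero>\<^bsub>A\<^esub>, \<zero>\<^bsub>B\<^esub>)"
  "\<one>\<^bsub>amalgamation A B f J\<^esub> = (\<one>\<^bsub>A\<^esub>, \<one>\<^bsub>B\<^esub>)"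
  by (simp_all add: amalgamation_def RDP_simps)

lemma C_simps:
  "carrier (img_plus_ideal A B f J) = {f a \<oplus>\<^bsub>B\<^esub> j | a j. a \<in> carrier A \<and> j \<in> J}"
  "x \<otimes>\<^bsub>img_plus_ideal A B f J\<^esub> y = x \<otimes>\<^bsub>B\<^esub> y"
  "x \<oplus>\<^bsub>img_plus_ideal A B f J\<^esub> y = x \<oplus>\<^bsub>B\<^esub> y"
  "\<zero>\<^bsub>img_plus_ideal A B f J\<^esub> = \<zero>\<^bsub>B\<^esub>"
  "\<one>\<^bsub>img_plus_ideal A B f J\<^esub> = \<one>\<^bsub>B\<^esub>"
  by (simp_all add: img_plus_ideal_def)

lemma C_sub: "carrier (img_plus_ideal A B f J) \<subseteq> carrier B"
  using J.I_l_closed B.one_closed J.a_subset by (auto simp: C_simps)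

lemma subring_C: "subring (carrier (img_plus_ideal A B f J)) B"
proof (rule B.subringI)
  show "carrier (img_plus_ideal A B f J) \<subseteq> carrier B" by (rule C_sub)
  show "\<one>\<^bsub>B\<^esub> \<in> carrier (img_plus_ideal A B f J)"
  proof -
    have "\<one>\<^bsub>B\<^esub> = f \<one>\<^bsub>A\<^esub> \<oplus>\<^bsub>B\<^esub> \<zero>\<^bsub>B\<^esub>" by simp
    moreover have "\<zero>\<^bsub>B\<^esub> \<in> J" by (rule additive_subgroup.zero_closed[OF ideal.axioms(1)[OF J]])
    ultimately show ?thesis unfolding C_simps by blast
  qed
  fix h1 h2 assume h1: "h1 \<in> carrier (img_plus_ideal A B f J)" and h2: "h2 \<in> carrier (img_plus_ideal A B f J)"
  from h1 obtain a j where h1e: "h1 = f a \<oplus>\<^bsub>B\<^esub> j" "a \<in> carrier A" "j \<in> J" by (auto simp: C_simps)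
  from h2 obtain a' j' where h2e: "h2 = f a' \<oplus>\<^bsub>B\<^esub> j'" "a' \<in> carrier A" "j' \<in> J" by (auto simp: C_simps)
  have jB: "j \<in> carrier B" "j' \<in> carrier B" using h1e h2e J.a_subset by auto
  have "h1 \<otimes>\<^bsub>B\<^esub> h2 = f (a \<otimes>\<^bsub>A\<^esub> a') \<oplus>\<^bsub>B\<^esub> ((f a \<otimes>\<^bsub>B\<^esub> j' \<oplus>\<^bsub>B\<^esub> j \<otimes>\<^bsub>B\<^esub> f a') \<oplus>\<^bsub>B\<^esub> j \<otimes>\<^bsub>B\<^esub> j')"
    using h1e h2e jB by (simp add: B.l_distr B.r_distr B.a_ac)
  moreover have "(f a \<otimes>\<^bsub>B\<^esub> j' \<oplus>\<^bsub>B\<^esub> j \<otimes>\<^bsub>B\<^esub> f a') \<oplus>\<^bsub>B\<^esub> j \<otimes>\<^bsub>B\<^esub> j' \<in> J"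
    using h1e h2e jB by (simp add: J.I_l_closed J.I_r_closed J.a_closed)
  ultimately show "h1 \<otimes>\<^bsub>B\<^esub> h2 \<in> carrier (img_plus_ideal A B f J)"
    using h1e h2e unfolding C_simps by blast
  have "h1 \<oplus>\<^bsub>B\<^esub> h2 = f (a \<oplus>\<^bsub>A\<^esub> a') \<oplus>\<^bsub>B\<^esub> (j \<oplus>\<^bsub>B\<^esub> j')"
    using h1e h2e jB by (simp add: B.a_ac)
  moreover have "j \<oplus>\<^bsub>B\<^esub> j' \<in> J" using h1e h2e by (simp add: J.a_closed)
  ultimately show "h1 \<oplus>\<^bsub>B\<^esub> h2 \<in> carrier (img_plus_ideal A B f J)"
    using h1e h2e unfolding C_simps by blast
  have "\<ominus>\<^bsub>B\<^esub> h1 = f (\<ominus>\<^bsub>A\<^esub> a) \<oplus>\<^bsub>B\<^esub> (\<ominus>\<^bsub>B\<^esub> j)"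
    using h1e jB by (simp add: B.minus_add)
  moreover have "\<ominus>\<^bsub>B\<^esub> j \<in> J" using h1e by (simp add: J.a_inv_closed)
  ultimately show "\<ominus>\<^bsub>B\<^esub> h1 \<in> carrier (img_plus_ideal A B f J)"
    using h1e unfolding C_simps by blast
qed

lemma ring_C: "ring (img_plus_ideal A B f J)"
  using B.subring_is_ring[OF subring_C] by (simp add: img_plus_ideal_def)

lemma ring_RDP: "ring (RDirProd A B)" by (rule RDirProd_ring[OF A B])

lemma RDP_carrier: "carrier (RDirProd A B) = carrier A \<times> carrier B" by (rule RDirProd_carrier)

lemma RDP_minus: "a \<in> carrier A \<Longrightarrow> b \<in> carrier B \<Longrightarrow>
   \<ominus>\<^bsub>RDirProd A B\<^esub> (a, b) = (\<ominus>\<^bsub>A\<^esub> a, \<ominus>\<^bsub>B\<^esub> b)"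
  by (rule abelian_group.minus_equality[OF ring.is_abelian_group[OF ring_RDP]]) (simp_all add: RDP_simps RDP_carrier A.l_neg B.l_neg)

lemma subring_Am: "subring (carrier (amalgamation A B f J)) (RDirProd A B)"
proof (rule ring.subringI[OF ring_RDP])
  show "carrier (amalgamation A B f J) \<subseteq> carrier (RDirProd A B)"
    using J.a_subset by (auto simp: Am_simps RDP_carrier)
  show "\<one>\<^bsub>RDirProd A B\<^esub> \<in> carrier (amalgamation A B f J)"
  proof -
    have "\<one>\<^bsub>RDirProd A B\<^esub> = (\<one>\<^bsub>A\<^esub>, f \<one>\<^bsub>A\<^esub> \<oplus>\<^bsub>B\<^esub> \<zero>\<^bsub>B\<^esub>)" by (simp add: RDP_simps)
    moreover have "\<zero>\<^bsub>B\<^esub> \<in> J" by (rule additive_subgroup.zero_closed[OF ideal.axioms(1)[OF J]])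
    ultimately show ?thesis unfolding Am_simps by blast
  qed
  fix h1 h2 assume h1: "h1 \<in> carrier (amalgamation A B f J)" and h2: "h2 \<in> carrier (amalgamation A B f J)"
  from h1 obtain a j where h1e: "h1 = (a, f a \<oplus>\<^bsub>B\<^esub> j)" "a \<in> carrier A" "j \<in> J" by (auto simp: Am_simps)
  from h2 obtain a' j' where h2e: "h2 = (a', f a' \<oplus>\<^bsub>B\<^esub> j')" "a' \<in> carrier A" "j' \<in> J" by (auto simp: Am_simps)
  have jB: "j \<in> carrier B" "j' \<in> carrier B" using h1e h2e J.a_subset by auto
  have "h1 \<otimes>\<^bsub>RDirProd A B\<^esub> h2 = (a \<otimes>\<^bsub>A\<^esub> a', f (a \<otimes>\<^bsub>A\<^esub> a') \<oplus>\<^bsub>B\<^esub> ((f a \<otimes>\<^bsub>B\<^esub> j' \<oplus>\<^bsub>B\<^esub> j \<otimes>\<^bsub>B\<^esub> f a') \<oplus>\<^bsub>B\<^esub> j \<otimes>\<^bsub>B\<^esub> j'))"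
    using h1e h2e jB by (simp add: RDP_simps B.l_distr B.r_distr B.a_ac)
  moreover have "(f a \<otimes>\<^bsub>B\<^esub> j' \<oplus>\<^bsub>B\<^esub> j \<otimes>\<^bsub>B\<^esub> f a') \<oplus>\<^bsub>B\<^esub> j \<otimes>\<^bsub>B\<^esub> j' \<in> J"
    using h1e h2e jB by (simp add: J.I_l_closed J.I_r_closed J.a_closed)
  ultimately show "h1 \<otimes>\<^bsub>RDirProd A B\<^esub> h2 \<in> carrier (amalgamation A B f J)"
    using h1e h2e unfolding Am_simps by blast
  have "h1 \<oplus>\<^bsub>RDirProd A B\<^esub> h2 = (a \<oplus>\<^bsub>A\<^esub> a', f (a \<oplus>\<^bsub>A\<^esub> a') \<oplus>\<^bsub>B\<^esub> (j \<oplus>\<^bsub>B\<^esub> j'))"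
    using h1e h2e jB by (simp add: RDP_simps B.a_ac)
  moreover have "j \<oplus>\<^bsub>B\<^esub> j' \<in> J" using h1e h2e by (simp add: J.a_closed)
  ultimately show "h1 \<oplus>\<^bsub>RDirProd A B\<^esub> h2 \<in> carrier (amalgamation A B f J)"
    using h1e h2e unfolding Am_simps by blast
  have "\<ominus>\<^bsub>RDirProd A B\<^esub> h1 = (\<ominus>\<^bsub>A\<^esub> a, f (\<ominus>\<^bsub>A\<^esub> a) \<oplus>\<^bsub>B\<^esub> (\<ominus>\<^bsub>B\<^esub> j))"
    using h1e jB by (simp add: RDP_minus B.minus_add)
  moreover have "\<ominus>\<^bsub>B\<^esub> j \<in> J" using h1e by (simp add: J.a_inv_closed)
  ultimately show "\<ominus>\<^bsub>RDirProd A B\<^esub> h1 \<in> carrier (amalgamation A B f J)"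
    using h1e unfolding Am_simps by blast
qed

lemma ring_Am: "ring (amalgamation A B f J)"
  using ring.subring_is_ring[OF ring_RDP subring_Am] by (simp add: amalgamation_def)

lemma Am_carrier_sub: "x \<in> carrier (amalgamation A B f J) \<Longrightarrow> fst x \<in> carrier A \<and> snd x \<in> carrier (img_plus_ideal A B f J)"
  by (auto simp: Am_simps C_simps) blast

lemma hom_emb: "(\<lambda>a. (a, f a)) \<in> ring_hom A (amalgamation A B f J)"
proof (rule ring_hom_memI)
  have z: "\<zero>\<^bsub>B\<^esub> \<in> J" by (rule additive_subgroup.zero_closed[OF ideal.axioms(1)[OF J]])
  fix a assume a: "a \<in> carrier A"
  hence "(a, f a) = (a, f a \<oplus>\<^bsub>B\<^esub> \<zero>\<^bsub>B\<^esub>)" by simp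
  thus "(a, f a) \<in> carrier (amalgamation A B f J)" using a z unfolding Am_simps by blast
next
  fix x y assume "x \<in> carrier A" "y \<in> carrier A"
  thus "(x \<otimes>\<^bsub>A\<^esub> y, f (x \<otimes>\<^bsub>A\<^esub> y)) = (x, f x) \<otimes>\<^bsub>amalgamation A B f J\<^esub> (y, f y)"
   and "(x \<oplus>\<^bsub>A\<^esub> y, f (x \<oplus>\<^bsub>A\<^esub> y)) = (x, f x) \<oplus>\<^bsub>amalgamation A B f J\<^esub> (y, f y)"
    by (simp_all add: Am_simps RDP_simps)
next
  show "(\<one>\<^bsub>A\<^esub>, f \<one>\<^bsub>A\<^esub>) = \<one>\<^bsub>amalgamation A B f J\<^esub>" by (simp add: Am_simps)
qed

lemma hom_fst: "fst \<in> ring_hom (amalgamation A B f J) A"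
proof (rule ring_hom_memI)
  fix x assume "x \<in> carrier (amalgamation A B f J)"
  thus "fst x \<in> carrier A" using Am_carrier_sub by blast
next
  fix x y :: "'a \<times> 'b"
  show "fst (x \<otimes>\<^bsub>amalgamation A B f J\<^esub> y) = fst x \<otimes>\<^bsub>A\<^esub> fst y"
   and "fst (x \<oplus>\<^bsub>amalgamation A B f J\<^esub> y) = fst x \<oplus>\<^bsub>A\<^esub> fst y"
    by (cases x, cases y, simp add: Am_simps RDP_simps)+
next
  show "fst \<one>\<^bsub>amalgamation A B f J\<^esub> = \<one>\<^bsub>A\<^esub>" by (simp add: Am_simps)
qed

lemma hom_snd: "snd \<in> ring_hom (amalgamation A B f J) (img_plus_ideal A B f J)"
proof (rule ring_hom_memI)
  fix x assume "x \<in> carrier (amalgamation A B f J)"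
  thus "snd x \<in> carrier (img_plus_ideal A B f J)" using Am_carrier_sub by blast
next
  fix x y :: "'a \<times> 'b"
  show "snd (x \<otimes>\<^bsub>amalgamation A B f J\<^esub> y) = snd x \<otimes>\<^bsub>img_plus_ideal A B f J\<^esub> snd y"
   and "snd (x \<oplus>\<^bsub>amalgamation A B f J\<^esub> y) = snd x \<oplus>\<^bsub>img_plus_ideal A B f J\<^esub> snd y"
    by (cases x, cases y, simp add: Am_simps RDP_simps C_simps)+
next
  show "snd \<one>\<^bsub>amalgamation A B f J\<^esub> = \<one>\<^bsub>img_plus_ideal A B f J\<^esub>" by (simp add: Am_simps C_simps)
qed

lemma hom_id: "(\<lambda>x. x) \<in> ring_hom (img_plus_ideal A B f J) B"
proof (rule ring_hom_memI)
  fix x assume "x \<in> carrier (img_plus_ideal A B f J)"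
  thus "x \<in> carrier B" using C_sub by blast
qed (simp_all add: C_simps)

lemma hom_sndB: "snd \<in> ring_hom (amalgamation A B f J) B"
  using ring_hom_trans[OF hom_snd hom_id] by (simp add: comp_def)

lemma C_pow: "x [^]\<^bsub>img_plus_ideal A B f J\<^esub> (n::nat) = x [^]\<^bsub>B\<^esub> n"
  unfolding img_plus_ideal_def by (rule nat_pow_upd)

lemma wa_Am_imp_A: "weak_armendariz (amalgamation A B f J) \<Longrightarrow> weak_armendariz A"
  by (rule transfer_wa[OF A ring_Am hom_emb]) (auto simp: inj_on_def)

lemma wa_back:
  assumes wA: "weak_armendariz A" and wC: "weak_armendariz (img_plus_ideal A B f J)"
  shows "weak_armendariz (amalgamation A B f J)"
  unfolding weak_armendariz_def
proof (intro ballI impI allI)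
  interpret Am: ring "amalgamation A B f J" by (rule ring_Am)
  interpret C: ring "img_plus_ideal A B f J" by (rule ring_C)
  interpret F: ring_hom_ring "amalgamation A B f J" A fst using ring_hom_ringI2[OF ring_Am A hom_fst] .
  interpret S: ring_hom_ring "amalgamation A B f J" "img_plus_ideal A B f J" snd using ring_hom_ringI2[OF ring_Am ring_C hom_snd] .
  fix P Q i j assume P: "P \<in> carrier (UP (amalgamation A B f J))" and Q: "Q \<in> carrier (UP (amalgamation A B f J))"
    and PQ: "P \<otimes>\<^bsub>UP (amalgamation A B f J)\<^esub> Q = \<zero>\<^bsub>UP (amalgamation A B f J)\<^esub>"
  have P': "P \<in> up (amalgamation A B f J)" and Q': "Q \<in> up (amalgamation A B f J)" using P Q by (simp_all add: UP_carrier_eq)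
  have "(\<lambda>n. fst (P n)) \<otimes>\<^bsub>UP A\<^esub> (\<lambda>n. fst (Q n)) = \<zero>\<^bsub>UP A\<^esub>"
    using map_mult[OF ring_Am A hom_fst P' Q'] PQ by (simp add: UP_zero_eq Am_simps)
  hence "(\<lambda>n. fst (P n)) i \<otimes>\<^bsub>A\<^esub> (\<lambda>n. fst (Q n)) j \<in> nil_elems A"
    using wA map_up[OF ring_Am A hom_fst P'] map_up[OF ring_Am A hom_fst Q'] unfolding weak_armendariz_def
    by (metis UP_carrier_eq UP_coeff_eq)
  then obtain n where n: "(fst (P i) \<otimes>\<^bsub>A\<^esub> fst (Q j)) [^]\<^bsub>A\<^esub> (n::nat) = \<zero>\<^bsub>A\<^esub>" by (auto simp: nil_elems_def)
  have "(\<lambda>n. snd (P n)) \<otimes>\<^bsub>UP (img_plus_ideal A B f J)\<^esub> (\<lambda>n. snd (Q n)) = \<zero>\<^bsub>UP (img_plus_ideal A B f J)\<^esub>"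
    using map_mult[OF ring_Am ring_C hom_snd P' Q'] PQ by (simp add: UP_zero_eq Am_simps C_simps)
  hence "(\<lambda>n. snd (P n)) i \<otimes>\<^bsub>img_plus_ideal A B f J\<^esub> (\<lambda>n. snd (Q n)) j \<in> nil_elems (img_plus_ideal A B f J)"
    using wC map_up[OF ring_Am ring_C hom_snd P'] map_up[OF ring_Am ring_C hom_snd Q'] unfolding weak_armendariz_def
    by (metis UP_carrier_eq UP_coeff_eq)
  then obtain m where m: "(snd (P i) \<otimes>\<^bsub>img_plus_ideal A B f J\<^esub> snd (Q j)) [^]\<^bsub>img_plus_ideal A B f J\<^esub> (m::nat) = \<zero>\<^bsub>img_plus_ideal A B f J\<^esub>"
    by (auto simp: nil_elems_def)
  define w where "w = P i \<otimes>\<^bsub>amalgamation A B f J\<^esub> Q j"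
  have Pi: "P i \<in> carrier (amalgamation A B f J)" and Qj: "Q j \<in> carrier (amalgamation A B f J)" using P' Q' by auto
  hence w: "w \<in> carrier (amalgamation A B f J)" unfolding w_def by simp
  have fw: "fst w = fst (P i) \<otimes>\<^bsub>A\<^esub> fst (Q j)" unfolding w_def using Pi Qj by simp
  have sw: "snd w = snd (P i) \<otimes>\<^bsub>img_plus_ideal A B f J\<^esub> snd (Q j)" unfolding w_def using Pi Qj by simp
  have fwc: "fst w \<in> carrier A" and swc: "snd w \<in> carrier (img_plus_ideal A B f J)" using w by auto
  have "fst (w [^]\<^bsub>amalgamation A B f J\<^esub> (n + m)) = fst w [^]\<^bsub>A\<^esub> n \<otimes>\<^bsub>A\<^esub> fst w [^]\<^bsub>A\<^esub> m"
    using w fwc by (simp add: F.hom_nat_pow A.nat_pow_mult)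
  hence f0: "fst (w [^]\<^bsub>amalgamation A B f J\<^esub> (n + m)) = \<zero>\<^bsub>A\<^esub>" using n fw fwc by simp
  have "snd (w [^]\<^bsub>amalgamation A B f J\<^esub> (n + m)) = snd w [^]\<^bsub>img_plus_ideal A B f J\<^esub> n \<otimes>\<^bsub>img_plus_ideal A B f J\<^esub> snd w [^]\<^bsub>img_plus_ideal A B f J\<^esub> m"
    using w swc by (simp add: S.hom_nat_pow C.nat_pow_mult)
  moreover have "snd w [^]\<^bsub>img_plus_ideal A B f J\<^esub> m = \<zero>\<^bsub>img_plus_ideal A B f J\<^esub>" using m sw by simp
  ultimately have "snd (w [^]\<^bsub>amalgamation A B f J\<^esub> (n + m)) = \<zero>\<^bsub>img_plus_ideal A B f J\<^esub>"
    using swc by (simp add: C.r_null)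
  hence s0: "snd (w [^]\<^bsub>amalgamation A B f J\<^esub> (n + m)) = \<zero>\<^bsub>B\<^esub>" by (simp add: C_simps)
  have "w [^]\<^bsub>amalgamation A B f J\<^esub> (n + m) = \<zero>\<^bsub>amalgamation A B f J\<^esub>"
    using f0 s0 by (simp add: Am_simps prod_eq_iff)
  hence "w \<in> nil_elems (amalgamation A B f J)" using w by (auto simp: nil_elems_def)
  thus "up_ring.coeff (UP (amalgamation A B f J)) P i \<otimes>\<^bsub>amalgamation A B f J\<^esub> up_ring.coeff (UP (amalgamation A B f J)) Q j \<in> nil_elems (amalgamation A B f J)"
    using P' Q' by (simp add: UP_coeff_eq w_def)
qed

lemma wa_Am_imp_C:
  assumes wAm: "weak_armendariz (amalgamation A B f J)" and sJ: "s \<in> J" and sr: "s \<in> regular_central B"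
  shows "weak_armendariz (img_plus_ideal A B f J)"
  unfolding weak_armendariz_def
proof (intro ballI impI allI)
  interpret Am: ring "amalgamation A B f J" by (rule ring_Am)
  interpret C: ring "img_plus_ideal A B f J" by (rule ring_C)
  interpret SB: ring_hom_ring "amalgamation A B f J" B snd using ring_hom_ringI2[OF ring_Am B hom_sndB] .
  have s: "s \<in> carrier B" and cen: "\<forall>b\<in>carrier B. s \<otimes>\<^bsub>B\<^esub> b = b \<otimes>\<^bsub>B\<^esub> s"
    and reg: "\<forall>b\<in>carrier B. s \<otimes>\<^bsub>B\<^esub> b = \<zero>\<^bsub>B\<^esub> \<longrightarrow> b = \<zero>\<^bsub>B\<^esub>"
    using sr unfolding regular_central_def by blast+
  fix p q i j assume p: "p \<in> carrier (UP (img_plus_ideal A B f J))" and q: "q \<in> carrier (UP (img_plus_ideal A B f J))"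
    and pq: "p \<otimes>\<^bsub>UP (img_plus_ideal A B f J)\<^esub> q = \<zero>\<^bsub>UP (img_plus_ideal A B f J)\<^esub>"
  have p': "p \<in> up (img_plus_ideal A B f J)" and q': "q \<in> up (img_plus_ideal A B f J)" using p q by (simp_all add: UP_carrier_eq)
  have pB: "p \<in> up B" using map_up[OF ring_C B hom_id p'] by simp
  have qB: "q \<in> up B" using map_up[OF ring_C B hom_id q'] by simp
  have pqB: "p \<otimes>\<^bsub>UP B\<^esub> q = (\<lambda>n. \<zero>\<^bsub>B\<^esub>)"
    using map_mult[OF ring_C B hom_id p' q'] pq by (simp add: UP_zero_eq C_simps)
  have z: "\<zero>\<^bsub>B\<^esub> \<in> J" by (rule additive_subgroup.zero_closed[OF ideal.axioms(1)[OF J]])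
  have mk: "\<And>r. r \<in> up B \<Longrightarrow> (\<lambda>n. (\<zero>\<^bsub>A\<^esub>, s \<otimes>\<^bsub>B\<^esub> r n)) \<in> up (amalgamation A B f J)"
  proof -
    fix r assume r: "r \<in> up B"
    show "(\<lambda>n. (\<zero>\<^bsub>A\<^esub>, s \<otimes>\<^bsub>B\<^esub> r n)) \<in> up (amalgamation A B f J)"
    proof (rule mem_upI)
      fix n
      have rn: "r n \<in> carrier B" using r by auto
      hence "s \<otimes>\<^bsub>B\<^esub> r n \<in> J" using sJ by (simp add: J.I_r_closed)
      moreover have "(\<zero>\<^bsub>A\<^esub>, s \<otimes>\<^bsub>B\<^esub> r n) = (\<zero>\<^bsub>A\<^esub>, f \<zero>\<^bsub>A\<^esub> \<oplus>\<^bsub>B\<^esub> (s \<otimes>\<^bsub>B\<^esub> r n))"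
        using s rn by simp
      ultimately show "(\<zero>\<^bsub>A\<^esub>, s \<otimes>\<^bsub>B\<^esub> r n) \<in> carrier (amalgamation A B f J)"
        unfolding Am_simps by blast
    next
      from r obtain k where k: "bound \<zero>\<^bsub>B\<^esub> k r" by auto
      have "bound \<zero>\<^bsub>amalgamation A B f J\<^esub> k (\<lambda>n. (\<zero>\<^bsub>A\<^esub>, s \<otimes>\<^bsub>B\<^esub> r n))"
        using k s by (auto simp: bound_def Am_simps)
      thus "\<exists>k. bound \<zero>\<^bsub>amalgamation A B f J\<^esub> k (\<lambda>n. (\<zero>\<^bsub>A\<^esub>, s \<otimes>\<^bsub>B\<^esub> r n))" by blast
    qed
  qed
  define P where "P = (\<lambda>n. (\<zero>\<^bsub>A\<^esub>, s \<otimes>\<^bsub>B\<^esub> p n))"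
  define Q where "Q = (\<lambda>n. (\<zero>\<^bsub>A\<^esub>, s \<otimes>\<^bsub>B\<^esub> q n))"
  have P': "P \<in> up (amalgamation A B f J)" using mk[OF pB] by (simp add: P_def)
  have Q': "Q \<in> up (amalgamation A B f J)" using mk[OF qB] by (simp add: Q_def)
  have z0: "(\<lambda>n. \<zero>\<^bsub>A\<^esub>) \<in> up A" by (rule mem_upI) (auto simp: bound_def)
  have "(\<lambda>n. fst (P n)) \<otimes>\<^bsub>UP A\<^esub> (\<lambda>n. fst (Q n)) = (\<lambda>n. fst ((P \<otimes>\<^bsub>UP (amalgamation A B f J)\<^esub> Q) n))"
    by (rule map_mult[OF ring_Am A hom_fst P' Q'])
  moreover have "(\<lambda>n. fst (P n)) \<otimes>\<^bsub>UP A\<^esub> (\<lambda>n. fst (Q n)) = (\<lambda>n. \<zero>\<^bsub>A\<^esub>)"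
    using z0 by (simp add: P_def Q_def UP_mult_eq A.finsum_zero)
  ultimately have F0: "\<And>n. fst ((P \<otimes>\<^bsub>UP (amalgamation A B f J)\<^esub> Q) n) = \<zero>\<^bsub>A\<^esub>" by metis
  have pn: "\<And>n. p n \<in> carrier B" and qn: "\<And>n. q n \<in> carrier B" using pB qB by auto
  have key: "\<And>a b. a \<in> carrier B \<Longrightarrow> b \<in> carrier B \<Longrightarrow>
      (s \<otimes>\<^bsub>B\<^esub> a) \<otimes>\<^bsub>B\<^esub> (s \<otimes>\<^bsub>B\<^esub> b) = (s \<otimes>\<^bsub>B\<^esub> s) \<otimes>\<^bsub>B\<^esub> (a \<otimes>\<^bsub>B\<^esub> b)"
  proof -
    fix a b assume a: "a \<in> carrier B" and b: "b \<in> carrier B"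
    have "(s \<otimes>\<^bsub>B\<^esub> a) \<otimes>\<^bsub>B\<^esub> (s \<otimes>\<^bsub>B\<^esub> b) = s \<otimes>\<^bsub>B\<^esub> (a \<otimes>\<^bsub>B\<^esub> s) \<otimes>\<^bsub>B\<^esub> b"
      using a b s by (simp add: B.m_assoc)
    also have "a \<otimes>\<^bsub>B\<^esub> s = s \<otimes>\<^bsub>B\<^esub> a" using cen a by simp
    finally show "(s \<otimes>\<^bsub>B\<^esub> a) \<otimes>\<^bsub>B\<^esub> (s \<otimes>\<^bsub>B\<^esub> b) = (s \<otimes>\<^bsub>B\<^esub> s) \<otimes>\<^bsub>B\<^esub> (a \<otimes>\<^bsub>B\<^esub> b)"
      using a b s by (simp add: B.m_assoc)
  qed
  have sP: "(\<lambda>n. snd (P n)) \<in> up B" using map_up[OF ring_Am B hom_sndB P'] .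
  have sQ: "(\<lambda>n. snd (Q n)) \<in> up B" using map_up[OF ring_Am B hom_sndB Q'] .
  have "(\<lambda>n. snd (P n)) \<otimes>\<^bsub>UP B\<^esub> (\<lambda>n. snd (Q n)) = (\<lambda>n. snd ((P \<otimes>\<^bsub>UP (amalgamation A B f J)\<^esub> Q) n))"
    by (rule map_mult[OF ring_Am B hom_sndB P' Q'])
  moreover have "(\<lambda>n. snd (P n)) \<otimes>\<^bsub>UP B\<^esub> (\<lambda>n. snd (Q n)) = (\<lambda>n. \<zero>\<^bsub>B\<^esub>)"
  proof -
    have "(\<lambda>n. snd (P n)) \<otimes>\<^bsub>UP B\<^esub> (\<lambda>n. snd (Q n)) =
       (\<lambda>n. \<Oplus>\<^bsub>B\<^esub>i \<in> {..n}. (s \<otimes>\<^bsub>B\<^esub> p i) \<otimes>\<^bsub>B\<^esub> (s \<otimes>\<^bsub>B\<^esub> q (n-i)))"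
      using sP sQ by (simp add: UP_mult_eq P_def Q_def)
    also have "\<dots> = (\<lambda>n. \<Oplus>\<^bsub>B\<^esub>i \<in> {..n}. (s \<otimes>\<^bsub>B\<^esub> s) \<otimes>\<^bsub>B\<^esub> (p i \<otimes>\<^bsub>B\<^esub> q (n-i)))"
      using key pn qn by simp
    also have "\<dots> = (\<lambda>n. (s \<otimes>\<^bsub>B\<^esub> s) \<otimes>\<^bsub>B\<^esub> (\<Oplus>\<^bsub>B\<^esub>i \<in> {..n}. p i \<otimes>\<^bsub>B\<^esub> q (n-i)))"
      using s pn qn by (simp add: B.finsum_rdistr Pi_def)
    also have "\<dots> = (\<lambda>n. (s \<otimes>\<^bsub>B\<^esub> s) \<otimes>\<^bsub>B\<^esub> (p \<otimes>\<^bsub>UP B\<^esub> q) n)"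
      using pB qB by (simp add: UP_mult_eq)
    also have "\<dots> = (\<lambda>n. \<zero>\<^bsub>B\<^esub>)" using pqB s by simp
    finally show ?thesis .
  qed
  ultimately have S0: "\<And>n. snd ((P \<otimes>\<^bsub>UP (amalgamation A B f J)\<^esub> Q) n) = \<zero>\<^bsub>B\<^esub>" by metis
  have "P \<otimes>\<^bsub>UP (amalgamation A B f J)\<^esub> Q = \<zero>\<^bsub>UP (amalgamation A B f J)\<^esub>"
    using F0 S0 by (simp add: UP_zero_eq Am_simps prod_eq_iff fun_eq_iff)
  hence "P i \<otimes>\<^bsub>amalgamation A B f J\<^esub> Q j \<in> nil_elems (amalgamation A B f J)"
    using wAm P' Q' unfolding weak_armendariz_def by (metis UP_carrier_eq UP_coeff_eq)
  then obtain n where n: "(P i \<otimes>\<^bsub>amalgamation A B f J\<^esub> Q j) [^]\<^bsub>amalgamation A B f J\<^esub> (n::nat) = \<zero>\<^bsub>amalgamation A B f J\<^esub>"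
    by (auto simp: nil_elems_def)
  have Pi: "P i \<in> carrier (amalgamation A B f J)" and Qj: "Q j \<in> carrier (amalgamation A B f J)" using P' Q' by auto
  define zz where "zz = p i \<otimes>\<^bsub>B\<^esub> q j"
  have zz: "zz \<in> carrier B" using pn qn by (simp add: zz_def)
  have "snd ((P i \<otimes>\<^bsub>amalgamation A B f J\<^esub> Q j) [^]\<^bsub>amalgamation A B f J\<^esub> n) = (s \<otimes>\<^bsub>B\<^esub> (s \<otimes>\<^bsub>B\<^esub> zz)) [^]\<^bsub>B\<^esub> n"
    using Pi Qj key[OF pn qn] s zz by (simp add: SB.hom_nat_pow P_def Q_def zz_def B.m_assoc)
  also have "\<dots> = s [^]\<^bsub>B\<^esub> n \<otimes>\<^bsub>B\<^esub> (s [^]\<^bsub>B\<^esub> n \<otimes>\<^bsub>B\<^esub> zz [^]\<^bsub>B\<^esub> n)"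
    using B.pow_central[OF s _ cen] s zz by simp
  finally have "s [^]\<^bsub>B\<^esub> n \<otimes>\<^bsub>B\<^esub> (s [^]\<^bsub>B\<^esub> n \<otimes>\<^bsub>B\<^esub> zz [^]\<^bsub>B\<^esub> n) = \<zero>\<^bsub>B\<^esub>"
    using n by (simp add: Am_simps)
  hence "s [^]\<^bsub>B\<^esub> n \<otimes>\<^bsub>B\<^esub> zz [^]\<^bsub>B\<^esub> n = \<zero>\<^bsub>B\<^esub>"
    using B.pow_regular[OF s reg] s zz by simp
  hence zn: "zz [^]\<^bsub>B\<^esub> n = \<zero>\<^bsub>B\<^esub>"
    using B.pow_regular[OF s reg] s zz by simp
  have pC: "p i \<in> carrier (img_plus_ideal A B f J)" and qC: "q j \<in> carrier (img_plus_ideal A B f J)" using p' q' by auto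
  hence "p i \<otimes>\<^bsub>img_plus_ideal A B f J\<^esub> q j \<in> carrier (img_plus_ideal A B f J)" by simp
  hence "p i \<otimes>\<^bsub>img_plus_ideal A B f J\<^esub> q j \<in> nil_elems (img_plus_ideal A B f J)"
    using zn by (auto simp: nil_elems_def C_pow C_simps zz_def)
  thus "up_ring.coeff (UP (img_plus_ideal A B f J)) p i \<otimes>\<^bsub>img_plus_ideal A B f J\<^esub> up_ring.coeff (UP (img_plus_ideal A B f J)) q j \<in> nil_elems (img_plus_ideal A B f J)"
    using p' q' by (simp add: UP_coeff_eq)
qed

end

theorem theorem4p1:
  fixes A :: "('a, 'm) ring_scheme" and B :: "('b, 'n) ring_scheme"
    and f :: "'a \<Rightarrow> 'b" and J :: "'b set"
  assumes "ring A" and "ring B"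
    and "f \<in> ring_hom A B"
    and "ideal J B" and "J \<noteq> carrier B"
    and "J \<inter> regular_central B \<noteq> {}"
  shows "weak_armendariz (amalgamation A B f J) \<longleftrightarrow>
         weak_armendariz A \<and> weak_armendariz (img_plus_ideal A B f J)"
proof -
  obtain s where s: "s \<in> J" "s \<in> regular_central B" using assms(6) by blast
  show ?thesis
    using wa_Am_imp_A[OF assms(1-4)] wa_Am_imp_C[OF assms(1-4) _ s] wa_back[OF assms(1-4)] by blast
qed

end
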